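(* Let $P,R\in\mathrm{Sym}(n,\mathbb{R})$ and $Q\in\mathrm{Mat}(n,\mathbb{R})$, let $B=\begin{bmatrix}P^{-1}&-P^{-1}Q\\-Q^TP^{-1}&Q^TP^{-1}Q-R\end{bmatrix}$ and $J=\begin{bmatrix}0&-I_n\\ I_n&0\end{bmatrix}$. If $\begin{bmatrix}P&Q\\Q^T&R\end{bmatrix}$ is positive definite, then $JB$ is hyperbolic.
   Context: A real matrix is hyperbolic if it has no eigenvalue on the imaginary axis. (Positive definiteness of the block matrix forces $P$ to be positive definite, hence invertible.) *)

theory Defs
  imports "Jordan_Normal_Form.Matrix" "Jordan_Normal_Form.Char_Poly"
begin

definition mat_inv :: "'a :: comm_ring_1 mat \<Rightarrow> 'a mat" where
  "mat_inv A = (SOME B. B \<in> carrier_mat (dim_row A) (dim_row A) \<and> inverts_mat A B \<and> inverts_mat B A)"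

definition pos_def_mat :: "real mat \<Rightarrow> bool" where
  "pos_def_mat A = (A \<in> carrier_mat (dim_row A) (dim_row A) \<and> A\<^sup>T = A \<and>
     (\<forall>x \<in> carrier_vec (dim_row A). x \<noteq> 0\<^sub>v (dim_row A) \<longrightarrow> x \<bullet> (A *\<^sub>v x) > 0))"

definition hyperbolic_mat :: "real mat \<Rightarrow> bool" where
  "hyperbolic_mat A = (\<forall>z::complex. eigenvalue (map_mat complex_of_real A) z \<longrightarrow> Re z \<noteq> 0)"

end

theory Submission
  imports Defs
begin


lemma cquad:
  fixes M :: "real mat"
  assumes M: "M \<in> carrier_mat m m" "M\<^sup>T = M" and w: "w \<in> carrier_vec m"
  shows "map_vec cnj w \<bullet> (map_mat of_real M *\<^sub>v w) =
    of_real (map_vec Re w \<bullet> (M *\<^sub>v map_vec Re w) + map_vec Im w \<bullet> (M *\<^sub>v map_vec Im w))"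
proof -
  have sym: "M $$ (i,j) = M $$ (j,i)" if "i < m" "j < m" for i j
    using M that by (metis carrier_matD(1) carrier_matD(2) index_transpose_mat(1))
  define a where "a i = Re (w $ i)" for i
  define b where "b i = Im (w $ i)" for i
  have L: "map_vec cnj w \<bullet> (map_mat of_real M *\<^sub>v w) =
     (\<Sum>i<m. \<Sum>j<m. cnj (w $ i) * (of_real (M $$ (i,j)) * w $ j))"
    using M w by (auto simp: scalar_prod_def mult_mat_vec_def sum_distrib_left atLeast0LessThan row_def)
  have R: "map_vec Re w \<bullet> (M *\<^sub>v map_vec Re w) + map_vec Im w \<bullet> (M *\<^sub>v map_vec Im w) =
     (\<Sum>i<m. \<Sum>j<m. M $$ (i,j) * (a i * a j + b i * b j))"
    using M w by (auto simp: scalar_prod_def mult_mat_vec_def sum_distrib_left atLeast0LessThan row_def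
       a_def b_def algebra_simps sum.distrib)
  have S: "(\<Sum>i<m. \<Sum>j<m. M $$ (i,j) * (a i * b j)) = (\<Sum>i<m. \<Sum>j<m. M $$ (i,j) * (b i * a j))"
    apply (subst sum.swap)
    apply (rule sum.cong[OF refl], rule sum.cong[OF refl])
    using sym by auto
  have "(\<Sum>i<m. \<Sum>j<m. cnj (w $ i) * (of_real (M $$ (i,j)) * w $ j)) =
     of_real (\<Sum>i<m. \<Sum>j<m. M $$ (i,j) * (a i * a j + b i * b j))"
  proof (rule complex_eqI)
    show "Re (\<Sum>i<m. \<Sum>j<m. cnj (w $ i) * (of_real (M $$ (i,j)) * w $ j)) =
       Re (of_real (\<Sum>i<m. \<Sum>j<m. M $$ (i,j) * (a i * a j + b i * b j)))"
      by (simp add: Re_sum a_def b_def algebra_simps)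
    have "Im (\<Sum>i<m. \<Sum>j<m. cnj (w $ i) * (of_real (M $$ (i,j)) * w $ j)) =
      (\<Sum>i<m. \<Sum>j<m. M $$ (i,j) * (a i * b j)) - (\<Sum>i<m. \<Sum>j<m. M $$ (i,j) * (b i * a j))"
      by (simp add: Im_sum a_def b_def algebra_simps sum_subtractf[symmetric])
    then show "Im (\<Sum>i<m. \<Sum>j<m. cnj (w $ i) * (of_real (M $$ (i,j)) * w $ j)) =
       Im (of_real (\<Sum>i<m. \<Sum>j<m. M $$ (i,j) * (a i * a j + b i * b j)))"
      using S by simp
  qed
  then show ?thesis using L R by simp
qed


lemma b1: fixes X Y :: "real mat" assumes X: "X \<in> carrier_mat n n" and Y: "Y \<in> carrier_mat n n"
  shows "0\<^sub>m n n * Y + - 1\<^sub>m n * - X = X"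
proof -
  have "0\<^sub>m n n * Y = 0\<^sub>m n n" using Y by simp
  moreover have "- 1\<^sub>m n * - X = X" using X by simp
  ultimately show ?thesis using X by simp
qed
lemma b2: fixes X Y :: "real mat" assumes X: "X \<in> carrier_mat n n" and Y: "Y \<in> carrier_mat n n"
  shows "1\<^sub>m n * X + 0\<^sub>m n n * Y = X"
proof -
  have "0\<^sub>m n n * Y = 0\<^sub>m n n" using Y by simp
  moreover have "1\<^sub>m n * X = X" using X by simp
  ultimately show ?thesis using X by simp
qed
lemma b3: fixes X Y R :: "real mat" assumes X: "X \<in> carrier_mat n n" and Y: "Y \<in> carrier_mat n n"
  and R: "R \<in> carrier_mat n n"
  shows "0\<^sub>m n n * Y + - 1\<^sub>m n * (X - R) = R - X"
proof -
  have "0\<^sub>m n n * Y = 0\<^sub>m n n" using Y by simp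
  moreover have "- 1\<^sub>m n * (X - R) = R - X" using X R by (intro eq_matI) auto
  ultimately show ?thesis using X R minus_carrier_mat[OF X, of R] by simp
qed


lemma key:
  fixes Pc Qc Rc Pic :: "complex mat" and l :: complex
  assumes Pc: "Pc \<in> carrier_mat n n" and Qc: "Qc \<in> carrier_mat n n" and Rc: "Rc \<in> carrier_mat n n"
    and Pic: "Pic \<in> carrier_mat n n" and PP: "Pc * Pic = 1\<^sub>m n"
    and pd: "\<And>w. w \<in> carrier_vec (n+n) \<Longrightarrow> w \<noteq> 0\<^sub>v (n+n) \<Longrightarrow>
               map_vec cnj w \<bullet> (four_block_mat Pc Qc Qc\<^sup>T Rc *\<^sub>v w) \<noteq> 0"
    and ev: "eigenvector (four_block_mat (Qc\<^sup>T * Pic) (Rc - Qc\<^sup>T * Pic * Qc) Pic (-(Pic * Qc))) v l"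
  shows "Re l \<noteq> 0"
proof
  assume Rel: "Re l = 0"
  have QT: "Qc\<^sup>T \<in> carrier_mat n n" using Qc by simp
  from ev have v: "v \<in> carrier_vec (n+n)" and v0: "v \<noteq> 0\<^sub>v (n+n)"
    and Kv: "four_block_mat (Qc\<^sup>T * Pic) (Rc - Qc\<^sup>T * Pic * Qc) Pic (-(Pic * Qc)) *\<^sub>v v = l \<cdot>\<^sub>v v"
    unfolding eigenvector_def using Pc Qc Pic by auto
  define x where "x = vec_first v n"
  define y where "y = vec_last v n"
  have x: "x \<in> carrier_vec n" and y: "y \<in> carrier_vec n" unfolding x_def y_def by auto
  have vxy: "v = x @\<^sub>v y" unfolding x_def y_def using v by simp
  define a where "a = Pic *\<^sub>v x"
  define qy where "qy = Qc *\<^sub>v y"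
  define b where "b = Pic *\<^sub>v qy"
  have a: "a \<in> carrier_vec n" and qy: "qy \<in> carrier_vec n" and b: "b \<in> carrier_vec n"
    unfolding a_def b_def qy_def using Pic Qc x y by auto
  have "four_block_mat (Qc\<^sup>T * Pic) (Rc - Qc\<^sup>T * Pic * Qc) Pic (-(Pic * Qc)) *\<^sub>v v
     = ((Qc\<^sup>T * Pic) *\<^sub>v x + (Rc - Qc\<^sup>T * Pic * Qc) *\<^sub>v y) @\<^sub>v (Pic *\<^sub>v x + (-(Pic * Qc)) *\<^sub>v y)"
    unfolding vxy
    by (rule four_block_mat_mult_vec, insert Pc Qc Rc Pic x y, auto)
  moreover have "l \<cdot>\<^sub>v v = (l \<cdot>\<^sub>v x) @\<^sub>v (l \<cdot>\<^sub>v y)"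
    unfolding vxy by (rule eq_vecI, insert x y, auto)
  ultimately have "((Qc\<^sup>T * Pic) *\<^sub>v x + (Rc - Qc\<^sup>T * Pic * Qc) *\<^sub>v y) @\<^sub>v (Pic *\<^sub>v x + (-(Pic * Qc)) *\<^sub>v y)
     = (l \<cdot>\<^sub>v x) @\<^sub>v (l \<cdot>\<^sub>v y)" using Kv by simp
  note app = this
  have E: "(Qc\<^sup>T * Pic) *\<^sub>v x + (Rc - Qc\<^sup>T * Pic * Qc) *\<^sub>v y = l \<cdot>\<^sub>v x"
     "Pic *\<^sub>v x + (-(Pic * Qc)) *\<^sub>v y = l \<cdot>\<^sub>v y"
  proof -
    have c1: "(Qc\<^sup>T * Pic) *\<^sub>v x + (Rc - Qc\<^sup>T * Pic * Qc) *\<^sub>v y \<in> carrier_vec n"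
      using Pc Qc Rc Pic x y unfolding carrier_vec_def by simp
    have c2: "l \<cdot>\<^sub>v x \<in> carrier_vec n" using x by simp
    show "(Qc\<^sup>T * Pic) *\<^sub>v x + (Rc - Qc\<^sup>T * Pic * Qc) *\<^sub>v y = l \<cdot>\<^sub>v x"
     "Pic *\<^sub>v x + (-(Pic * Qc)) *\<^sub>v y = l \<cdot>\<^sub>v y"
      using append_vec_eq[OF c1 c2] app by blast+
  qed
  have E1: "Qc\<^sup>T *\<^sub>v a + (Rc *\<^sub>v y - Qc\<^sup>T *\<^sub>v b) = l \<cdot>\<^sub>v x"
    using E(1) unfolding a_def b_def qy_def
    using Pc Qc Rc Pic x y
    using mult_carrier_mat[OF Pic Qc]
    by (simp add: minus_mult_distrib_mat_vec[of _ n n])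
  have E2: "a - b = l \<cdot>\<^sub>v y"
    using E(2) unfolding a_def b_def qy_def
    using Pc Qc Rc Pic x y
    using mult_carrier_mat[OF Pic Qc] minus_add_uminus_vec[OF a b]
    unfolding a_def b_def qy_def
    by (subst (asm) uminus_mult_mat_vec, auto)
  have G1: "Qc\<^sup>T *\<^sub>v (l \<cdot>\<^sub>v y) + Rc *\<^sub>v y = l \<cdot>\<^sub>v x"
  proof -
    have "Qc\<^sup>T *\<^sub>v (l \<cdot>\<^sub>v y) = Qc\<^sup>T *\<^sub>v a - Qc\<^sup>T *\<^sub>v b"
      unfolding E2[symmetric] using QT a b by (simp add: mult_minus_distrib_mat_vec)
    then show ?thesis using E1[symmetric] QT Rc a b y x
      by (intro eq_vecI) auto
  qed
  have G2: "Pc *\<^sub>v (l \<cdot>\<^sub>v y) + Qc *\<^sub>v y = x"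
  proof -
    have "Pc *\<^sub>v (l \<cdot>\<^sub>v y) = Pc *\<^sub>v a - Pc *\<^sub>v b"
      unfolding E2[symmetric] using Pc a b by (simp add: mult_minus_distrib_mat_vec)
    also have "Pc *\<^sub>v a = x" unfolding a_def
      using assoc_mult_mat_vec[OF Pc Pic x, symmetric] PP x by simp
    also have "Pc *\<^sub>v b = qy" unfolding b_def
      using assoc_mult_mat_vec[OF Pc Pic qy, symmetric] PP qy by simp
    finally show ?thesis using x qy unfolding qy_def[symmetric]
      by (intro eq_vecI) auto
  qed
  have y0: "y \<noteq> 0\<^sub>v n"
  proof
    assume "y = 0\<^sub>v n"
    with G2 Pc Qc have "x = 0\<^sub>v n" by auto
    with \<open>y = 0\<^sub>v n\<close> v0 vxy show False by auto
  qed
  define w where "w = (l \<cdot>\<^sub>v y) @\<^sub>v y"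
  have w: "w \<in> carrier_vec (n+n)" unfolding w_def using y by auto
  have w0: "w \<noteq> 0\<^sub>v (n+n)"
  proof
    assume "w = 0\<^sub>v (n+n)"
    then have "w $ (n + i) = 0" if "i < n" for i using that by simp
    then have "y $ i = 0" if "i < n" for i using that y unfolding w_def by simp
    then have "y = 0\<^sub>v n" using y by (intro eq_vecI) auto
    with y0 show False by simp
  qed
  have Mw: "four_block_mat Pc Qc Qc\<^sup>T Rc *\<^sub>v w = x @\<^sub>v (l \<cdot>\<^sub>v x)"
    unfolding w_def
    by (subst four_block_mat_mult_vec[OF Pc Qc QT Rc], insert y G1 G2, auto)
  define s where "s = map_vec cnj y \<bullet> x"
  have cw: "map_vec cnj w = (cnj l \<cdot>\<^sub>v map_vec cnj y) @\<^sub>v map_vec cnj y"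
    unfolding w_def using y by (intro eq_vecI) auto
  have "map_vec cnj w \<bullet> (four_block_mat Pc Qc Qc\<^sup>T Rc *\<^sub>v w) = cnj l * s + l * s"
    unfolding Mw cw s_def
    by (subst scalar_prod_append[of _ n _ n], insert x y, auto)
  also have "\<dots> = (cnj l + l) * s" by (simp add: algebra_simps)
  also have "cnj l + l = 0" using Rel by (simp add: complex_eq_iff)
  finally show False using pd[OF w w0] by simp
qed



lemma cpos:
  fixes M :: "real mat"
  assumes M: "M \<in> carrier_mat m m" "M\<^sup>T = M"
    and pd: "\<And>x. x \<in> carrier_vec m \<Longrightarrow> x \<noteq> 0\<^sub>v m \<Longrightarrow> x \<bullet> (M *\<^sub>v x) > 0"
    and w: "w \<in> carrier_vec m" "w \<noteq> 0\<^sub>v m"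
  shows "map_vec cnj w \<bullet> (map_mat of_real M *\<^sub>v w) \<noteq> 0"
proof -
  have ge: "x \<bullet> (M *\<^sub>v x) \<ge> 0" if "x \<in> carrier_vec m" for x
  proof (cases "x = 0\<^sub>v m")
    case True then show ?thesis using M by simp
  next
    case False then show ?thesis using pd[OF that] by simp
  qed
  let ?a = "map_vec Re w" and ?b = "map_vec Im w"
  have ab: "?a \<in> carrier_vec m" "?b \<in> carrier_vec m" using w by auto
  have "?a \<noteq> 0\<^sub>v m \<or> ?b \<noteq> 0\<^sub>v m"
  proof (rule ccontr)
    assume "\<not> ?thesis"
    then have "?a = 0\<^sub>v m" "?b = 0\<^sub>v m" by auto
    then have "Re (w $ i) = 0 \<and> Im (w $ i) = 0" if "i < m" for i
      using that w by (metis carrier_vecD index_map_vec(1) index_zero_vec(1))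
    then have "w = 0\<^sub>v m" using w by (intro eq_vecI) (auto simp: complex_eq_iff)
    with w show False by simp
  qed
  then have "?a \<bullet> (M *\<^sub>v ?a) + ?b \<bullet> (M *\<^sub>v ?b) > 0"
    using pd[OF ab(1)] pd[OF ab(2)] ge[OF ab(1)] ge[OF ab(2)] by fastforce
  then show ?thesis unfolding cquad[OF M w(1)] by (metis of_real_eq_0_iff less_irrefl)
qed



theorem corollary2p2:
  fixes P Q R :: "real mat" and n :: nat
  assumes "P \<in> carrier_mat n n" and "Q \<in> carrier_mat n n" and "R \<in> carrier_mat n n"
    and "P\<^sup>T = P" and "R\<^sup>T = R"
    and "pos_def_mat (four_block_mat P Q Q\<^sup>T R)"
  shows "hyperbolic_mat
     (four_block_mat (0\<^sub>m n n) (- 1\<^sub>m n) (1\<^sub>m n) (0\<^sub>m n n) *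
      four_block_mat (mat_inv P) (- (mat_inv P * Q))
                     (- (Q\<^sup>T * mat_inv P)) (Q\<^sup>T * mat_inv P * Q - R))"
proof -
  note P = assms(1) and Q = assms(2) and R = assms(3)
  have QT: "Q\<^sup>T \<in> carrier_mat n n" using Q by simp
  define M where "M = four_block_mat P Q Q\<^sup>T R"
  have Mc: "M \<in> carrier_mat (n+n) (n+n)" unfolding M_def using P R by auto
  have MT: "M\<^sup>T = M" using assms(6) unfolding pos_def_mat_def M_def by simp
  have Mpd: "x \<bullet> (M *\<^sub>v x) > 0" if "x \<in> carrier_vec (n+n)" "x \<noteq> 0\<^sub>v (n+n)" for x
    using assms(6) that Mc unfolding pos_def_mat_def M_def[symmetric] by auto
  have Ppd: "x \<bullet> (P *\<^sub>v x) > 0" if x: "x \<in> carrier_vec n" "x \<noteq> 0\<^sub>v n" for x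
  proof -
    have x0: "x @\<^sub>v 0\<^sub>v n \<in> carrier_vec (n+n)" using x by auto
    have nz: "x @\<^sub>v 0\<^sub>v n \<noteq> 0\<^sub>v (n+n)"
    proof
      assume "x @\<^sub>v 0\<^sub>v n = 0\<^sub>v (n+n)"
      then have "x @\<^sub>v 0\<^sub>v n = 0\<^sub>v n @\<^sub>v 0\<^sub>v n" by (intro eq_vecI) auto
      then have "x = 0\<^sub>v n" using append_vec_eq[OF x(1), of "0\<^sub>v n"] by auto
      with x show False by simp
    qed
    have "M *\<^sub>v (x @\<^sub>v 0\<^sub>v n) = (P *\<^sub>v x + Q *\<^sub>v 0\<^sub>v n) @\<^sub>v (Q\<^sup>T *\<^sub>v x + R *\<^sub>v 0\<^sub>v n)"
      unfolding M_def by (rule four_block_mat_mult_vec[OF P Q QT R x(1)], simp)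
    then have "(x @\<^sub>v 0\<^sub>v n) \<bullet> (M *\<^sub>v (x @\<^sub>v 0\<^sub>v n)) = x \<bullet> (P *\<^sub>v x + Q *\<^sub>v 0\<^sub>v n) + 0\<^sub>v n \<bullet> (Q\<^sup>T *\<^sub>v x + R *\<^sub>v 0\<^sub>v n)"
      by (simp, subst scalar_prod_append[of _ n _ n], insert P Q R x, auto)
    also have "\<dots> = x \<bullet> (P *\<^sub>v x)"
    proof -
      have "Q *\<^sub>v 0\<^sub>v n = 0\<^sub>v n" using Q by (intro eq_vecI) auto
      moreover have "P *\<^sub>v x \<in> carrier_vec n" using P x by auto
      moreover have "Q\<^sup>T *\<^sub>v x + R *\<^sub>v 0\<^sub>v n \<in> carrier_vec n" using QT R x
        unfolding carrier_vec_def by simp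
      ultimately show ?thesis using x by simp
    qed
    finally show ?thesis using Mpd[OF x0 nz] by simp
  qed
  have detP: "det P \<noteq> 0"
  proof
    assume "det P = 0"
    then obtain v where v: "v \<in> carrier_vec n" "v \<noteq> 0\<^sub>v n" "P *\<^sub>v v = 0\<^sub>v n"
      using det_0_iff_vec_prod_zero[OF P] by auto
    then show False using Ppd[OF v(1,2)] v(1) by simp
  qed
  from det_non_zero_imp_unit[OF P detP, of undefined]
  obtain B where B: "B \<in> carrier_mat n n" "B * P = 1\<^sub>m n" "P * B = 1\<^sub>m n"
    unfolding Units_def ring_mat_def by auto
  have "\<exists>B. B \<in> carrier_mat (dim_row P) (dim_row P) \<and> inverts_mat P B \<and> inverts_mat B P"
    using B P unfolding inverts_mat_def by auto
  then have "mat_inv P \<in> carrier_mat (dim_row P) (dim_row P) \<and> inverts_mat P (mat_inv P) \<and> inverts_mat (mat_inv P) P"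
    unfolding mat_inv_def by (rule someI_ex)
  then have Pi: "mat_inv P \<in> carrier_mat n n" and PPi: "P * mat_inv P = 1\<^sub>m n"
    unfolding inverts_mat_def using P by auto
  define Pi where "Pi = mat_inv P"
  note Pi = Pi[folded Pi_def] and PPi = PPi[folded Pi_def]
  have prod: "four_block_mat (0\<^sub>m n n) (- 1\<^sub>m n) (1\<^sub>m n) (0\<^sub>m n n) *
      four_block_mat Pi (- (Pi * Q)) (- (Q\<^sup>T * Pi)) (Q\<^sup>T * Pi * Q - R)
    = four_block_mat (Q\<^sup>T * Pi) (R - Q\<^sup>T * Pi * Q) Pi (-(Pi * Q))"
  proof -
    have c: "Q\<^sup>T * Pi \<in> carrier_mat n n" "Pi * Q \<in> carrier_mat n n" "Q\<^sup>T * Pi * Q \<in> carrier_mat n n"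
      using QT Pi Q by auto
    have "four_block_mat (0\<^sub>m n n) (- 1\<^sub>m n) (1\<^sub>m n) (0\<^sub>m n n) *
      four_block_mat Pi (- (Pi * Q)) (- (Q\<^sup>T * Pi)) (Q\<^sup>T * Pi * Q - R) =
      four_block_mat (0\<^sub>m n n * Pi + - 1\<^sub>m n * - (Q\<^sup>T * Pi)) (0\<^sub>m n n * - (Pi * Q) + - 1\<^sub>m n * (Q\<^sup>T * Pi * Q - R))
        (1\<^sub>m n * Pi + 0\<^sub>m n n * - (Q\<^sup>T * Pi)) (1\<^sub>m n * - (Pi * Q) + 0\<^sub>m n n * (Q\<^sup>T * Pi * Q - R))"
      by (rule mult_four_block_mat[OF zero_carrier_mat uminus_carrier_mat[OF one_carrier_mat] one_carrier_mat zero_carrier_mat Pi uminus_carrier_mat[OF c(2)] uminus_carrier_mat[OF c(1)] minus_carrier_mat[OF R]])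
    also have "\<dots> = four_block_mat (Q\<^sup>T * Pi) (R - Q\<^sup>T * Pi * Q) Pi (-(Pi * Q))"
    proof (rule cong_four_block_mat)
      show "0\<^sub>m n n * Pi + - 1\<^sub>m n * - (Q\<^sup>T * Pi) = Q\<^sup>T * Pi" by (rule b1[OF c(1) Pi])
      show "0\<^sub>m n n * - (Pi * Q) + - 1\<^sub>m n * (Q\<^sup>T * Pi * Q - R) = R - Q\<^sup>T * Pi * Q"
        by (rule b3[OF c(3) uminus_carrier_mat[OF c(2)] R])
      show "1\<^sub>m n * Pi + 0\<^sub>m n n * - (Q\<^sup>T * Pi) = Pi" by (rule b2[OF Pi uminus_carrier_mat[OF c(1)]])
      show "1\<^sub>m n * - (Pi * Q) + 0\<^sub>m n n * (Q\<^sup>T * Pi * Q - R) = - (Pi * Q)" by (rule b2[OF uminus_carrier_mat[OF c(2)] minus_carrier_mat[OF R]])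
    qed
    finally show ?thesis .
  qed
  let ?h = "map_mat (complex_of_real)"
  have mminus: "?h (A - B) = ?h A - ?h B" if "A \<in> carrier_mat n n" "B \<in> carrier_mat n n" for A B
    using that by (intro eq_matI) auto
  have muminus: "?h (- A) = - ?h A" for A
    by (intro eq_matI) auto
  have c: "Q\<^sup>T * Pi \<in> carrier_mat n n" "Pi * Q \<in> carrier_mat n n" "Q\<^sup>T * Pi * Q \<in> carrier_mat n n"
    using QT Pi Q by auto
  have K: "?h (four_block_mat (Q\<^sup>T * Pi) (R - Q\<^sup>T * Pi * Q) Pi (-(Pi * Q))) =
    four_block_mat ((?h Q)\<^sup>T * ?h Pi) (?h R - (?h Q)\<^sup>T * ?h Pi * ?h Q) (?h Pi) (-(?h Pi * ?h Q))"
  proof -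
    have "?h (four_block_mat (Q\<^sup>T * Pi) (R - Q\<^sup>T * Pi * Q) Pi (-(Pi * Q))) =
      four_block_mat (?h (Q\<^sup>T * Pi)) (?h (R - Q\<^sup>T * Pi * Q)) (?h Pi) (?h (-(Pi * Q)))"
      by (rule map_four_block_mat[OF c(1) minus_carrier_mat[OF c(3)] Pi uminus_carrier_mat[OF c(2)]])
    also have "?h (Q\<^sup>T * Pi) = (?h Q)\<^sup>T * ?h Pi"
      using of_real_hom.mat_hom_mult[OF QT Pi] map_mat_transpose by metis
    also have "?h (R - Q\<^sup>T * Pi * Q) = ?h R - (?h Q)\<^sup>T * ?h Pi * ?h Q"
      using mminus[OF R c(3)] of_real_hom.mat_hom_mult[OF c(1) Q] of_real_hom.mat_hom_mult[OF QT Pi]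
        map_mat_transpose by metis
    also have "?h (-(Pi * Q)) = -(?h Pi * ?h Q)"
      using muminus of_real_hom.mat_hom_mult[OF Pi Q] by metis
    finally show ?thesis .
  qed
  have Mh: "four_block_mat (?h P) (?h Q) (?h Q)\<^sup>T (?h R) = ?h M"
    unfolding M_def using map_four_block_mat[OF P Q QT R] map_mat_transpose by metis
  have PPh: "?h P * ?h Pi = 1\<^sub>m n"
    using of_real_hom.mat_hom_mult[OF P Pi] PPi of_real_hom.mat_hom_one by metis
  show ?thesis
    unfolding hyperbolic_mat_def Pi_def[symmetric] prod K
  proof (intro allI impI)
    fix z assume "eigenvalue (four_block_mat ((?h Q)\<^sup>T * ?h Pi) (?h R - (?h Q)\<^sup>T * ?h Pi * ?h Q) (?h Pi) (-(?h Pi * ?h Q))) z"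
    then obtain v where ev: "eigenvector (four_block_mat ((?h Q)\<^sup>T * ?h Pi) (?h R - (?h Q)\<^sup>T * ?h Pi * ?h Q) (?h Pi) (-(?h Pi * ?h Q))) v z"
      unfolding eigenvalue_def by blast
    show "Re z \<noteq> 0"
    proof (rule key[OF _ _ _ _ PPh _ ev])
      show "?h P \<in> carrier_mat n n" "?h Q \<in> carrier_mat n n" "?h R \<in> carrier_mat n n"
        "?h Pi \<in> carrier_mat n n" using P Q R Pi by auto
      fix w :: "complex vec" assume "w \<in> carrier_vec (n+n)" "w \<noteq> 0\<^sub>v (n+n)"
      then show "map_vec cnj w \<bullet> (four_block_mat (?h P) (?h Q) (?h Q)\<^sup>T (?h R) *\<^sub>v w) \<noteq> 0"
        unfolding Mh using cpos[OF Mc MT, of w] Mpd by blast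
    qed
  qed
qed


end
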